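(* Let $x\in V$. There exists $v\in G\cdot x$ such that $\mu_{\mathfrak a}(\overline{G\cdot x})=\mu_{\mathfrak a}(\overline{A\cdot v})$; in particular $\mu_{\mathfrak a}(\overline{G\cdot x})$ is a polyhedral.
   Context: Let $V$ be a finite-dimensional real vector space with a scalar product $\langle\cdot,\cdot\rangle$. Let $G\subset\mathrm{GL}(V)$ be a connected closed subgroup, closed under transpose, with Lie algebra $\mathfrak g$, such that $G=K\exp(\mathfrak p)$ with $K=G\cap\mathrm O(V)$, $\mathfrak p=\mathfrak g\cap\mathrm{Sym}(V)$. Let $\mathfrak a\subset\mathfrak p$ be an Abelian subalgebra, $A=\exp(\mathfrak a)$, and $\mu_{\mathfrak a}:V\to\mathfrak a^*$, $\mu_{\mathfrak a}(x)(\xi)=\langle\xi x,x\rangle$. A polyhedral is an intersection of finitely many closed linear half-spaces. *)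

theory Defs
  imports "HOL-Analysis.Analysis"
begin

text \<open>V = real^'n with the standard scalar product (orthonormal coordinates).
  Linear endomorphisms of V are matrices real^'n^'n.\<close>

definition matpow :: "real^'n^'n \<Rightarrow> nat \<Rightarrow> real^'n^'n" where
  "matpow X k = (((**) X) ^^ k) (mat 1)"

definition mexp :: "real^'n^'n \<Rightarrow> real^'n^'n" where
  "mexp X = (\<Sum>k. (1 / fact k) *\<^sub>R matpow X k)"

definition GL :: "(real^'n^'n) set" where
  "GL = {g. invertible g}"

definition closed_transpose_subgroup :: "(real^'n^'n) set \<Rightarrow> bool" where
  "closed_transpose_subgroup G \<longleftrightarrow>
     G \<subseteq> GL \<and> mat 1 \<in> G \<and>
     (\<forall>g\<in>G. \<forall>h\<in>G. g ** h \<in> G) \<and> (\<forall>g\<in>G. matrix_inv g \<in> G) \<and>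
     closedin (top_of_set GL) G \<and> connected G \<and>
     (\<forall>g\<in>G. transpose g \<in> G)"

definition lie_alg :: "(real^'n^'n) set \<Rightarrow> (real^'n^'n) set" where
  "lie_alg G = {X. \<forall>t::real. mexp (t *\<^sub>R X) \<in> G}"

definition Kpart :: "(real^'n^'n) set \<Rightarrow> (real^'n^'n) set" where
  "Kpart G = {g \<in> G. orthogonal_matrix g}"

definition ppart :: "(real^'n^'n) set \<Rightarrow> (real^'n^'n) set" where
  "ppart G = {X \<in> lie_alg G. transpose X = X}"

definition abelian_subalg :: "(real^'n^'n) set \<Rightarrow> (real^'n^'n) set \<Rightarrow> bool" where
  "abelian_subalg a G \<longleftrightarrow> subspace a \<and> a \<subseteq> ppart G \<and>
     (\<forall>X\<in>a. \<forall>Y\<in>a. X ** Y - Y ** X = 0)"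

text \<open>Elements of the dual space a^* are represented as functions on matrices
  that are linear on a and vanish outside a.\<close>
definition adual :: "(real^'n^'n) set \<Rightarrow> (real^'n^'n \<Rightarrow> real) set" where
  "adual a = {l. (\<forall>\<xi>. \<xi> \<notin> a \<longrightarrow> l \<xi> = 0) \<and>
     (\<forall>\<xi>\<in>a. \<forall>\<eta>\<in>a. \<forall>c::real. l (c *\<^sub>R \<xi> + \<eta>) = c * l \<xi> + l \<eta>)}"

definition mu :: "(real^'n^'n) set \<Rightarrow> real^'n \<Rightarrow> (real^'n^'n \<Rightarrow> real)" where
  "mu a x = (\<lambda>\<xi>. if \<xi> \<in> a then (\<xi> *v x) \<bullet> x else 0)"

text \<open>Polyhedral subset of a^*: intersection of finitely many closed linear half-spaces
  (every linear functional on a^* is evaluation at some element of a).\<close>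
definition polyhedral :: "(real^'n^'n) set \<Rightarrow> (real^'n^'n \<Rightarrow> real) set \<Rightarrow> bool" where
  "polyhedral a P \<longleftrightarrow> (\<exists>F. finite F \<and> F \<subseteq> a \<and>
      P = {l \<in> adual a. \<forall>\<xi>\<in>F. l \<xi> \<le> 0})"

definition orbit :: "(real^'n^'n) set \<Rightarrow> real^'n \<Rightarrow> (real^'n) set" where
  "orbit H x = (\<lambda>g. g *v x) ` H"

end

theory Submission
  imports Defs "HOL-Analysis.Analysis"
begin


lemma mat_mult_ldist: "((A::real^'n^'n) + B) ** C = A ** C + B ** C"
  by (simp add: matrix_matrix_mult_def vec_eq_iff sum.distrib algebra_simps)

lemma mat_mult_lscale: "((c::real) *\<^sub>R (A::real^'n^'n)) ** C = c *\<^sub>R (A ** C)"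
  by (simp add: scalar_matrix_assoc)

lemma linear_lmult: "linear (\<lambda>h::real^'n^'n. g ** h)"
  by (rule linearI) (simp add: matrix_add_ldistrib, metis matrix_scalar_ac scalar_matrix_assoc)

lemma linear_rmult: "linear (\<lambda>h::real^'n^'n. h ** g)"
  by (rule linearI) (simp_all add: mat_mult_ldist mat_mult_lscale)

lemma cont_lmult: "continuous_on S (\<lambda>h::real^'n^'n. g ** h)"
  using linear_lmult linear_continuous_on linear_conv_bounded_linear by blast

lemma inv_props:
  assumes "invertible (g::real^'n^'n)"
  shows "g ** matrix_inv g = mat 1" "matrix_inv g ** g = mat 1"
proof -
  have "\<exists>A'. g ** A' = mat 1 \<and> A' ** g = mat 1" using assms by (simp add: invertible_def)
  then have "g ** matrix_inv g = mat 1 \<and> matrix_inv g ** g = mat 1"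
    unfolding matrix_inv_def by (rule someI_ex)
  then show "g ** matrix_inv g = mat 1" "matrix_inv g ** g = mat 1" by auto
qed

locale grp =
  fixes G :: "(real^'n^'n) set"
  assumes sub: "G \<subseteq> GL" and one: "mat 1 \<in> G"
    and mult: "\<And>g h. g \<in> G \<Longrightarrow> h \<in> G \<Longrightarrow> g ** h \<in> G"
    and inv: "\<And>g. g \<in> G \<Longrightarrow> matrix_inv g \<in> G"
    and conn: "connected G"
begin

lemma invt: "g \<in> G \<Longrightarrow> invertible g"
  using sub by (auto simp: GL_def)

lemma linv: "g \<in> G \<Longrightarrow> matrix_inv g ** g = mat 1"
  using inv_props invt by blast
lemma rinv: "g \<in> G \<Longrightarrow> g ** matrix_inv g = mat 1"
  using inv_props invt by blast

lemma preimg_open: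
  assumes "openin (top_of_set G) W" "g \<in> G"
  shows "openin (top_of_set G) {h \<in> G. g ** h \<in> W}"
proof -
  obtain T where T: "open T" "W = G \<inter> T" using assms(1) openin_open by metis
  have "{h \<in> G. g ** h \<in> W} = G \<inter> ((\<lambda>h. g ** h) -` T)"
    using T assms(2) mult by auto
  moreover have "open ((\<lambda>h. g ** h) -` T)"
    using T(1) cont_lmult[of UNIV g] by (simp add: continuous_on_open_vimage)
  ultimately show ?thesis by (simp add: openin_open_Int)
qed

lemma transl_open:
  assumes "openin (top_of_set G) N" "h \<in> G"
  shows "openin (top_of_set G) ((\<lambda>z. h ** z) ` N)"
proof -
  have NG: "N \<subseteq> G" using assms(1) openin_imp_subset by blast
  have "(\<lambda>z. h ** z) ` N = {y \<in> G. matrix_inv h ** y \<in> N}"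
  proof safe
    fix z assume "z \<in> N"
    then show "h ** z \<in> G" using NG assms(2) mult by auto
    show "matrix_inv h ** (h ** z) \<in> N" using \<open>z \<in> N\<close> linv[OF assms(2)]
      by (simp add: matrix_mul_assoc)
  next
    fix y assume "y \<in> G" "matrix_inv h ** y \<in> N"
    moreover have "y = h ** (matrix_inv h ** y)" using rinv[OF assms(2)]
      by (simp add: matrix_mul_assoc)
    ultimately show "y \<in> (\<lambda>z. h ** z) ` N" by blast
  qed
  then show ?thesis using preimg_open[OF assms(1) inv[OF assms(2)]] by simp
qed

lemma span_nbhd:
  assumes "openin (top_of_set G) N" "mat 1 \<in> N"
  shows "G \<subseteq> span N"
proof -
  define P where "P = (\<lambda>N. openin (top_of_set G) N \<and> mat 1 \<in> N)"
  have PG: "P G" unfolding P_def using one by auto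
  define d where "d = (LEAST k. \<exists>N. P N \<and> dim N = k)"
  have "\<exists>k. \<exists>N. P N \<and> dim N = k" using PG by blast
  then have "\<exists>N. P N \<and> dim N = d" unfolding d_def by (rule LeastI_ex)
  then obtain N0 where N0: "P N0" "dim N0 = d" by blast
  have dmin: "d \<le> dim N" if "P N" for N unfolding d_def using that by (auto intro: Least_le)
  define M where "M = span N0"
  have N0G: "N0 \<subseteq> G" using N0 unfolding P_def using openin_imp_subset by blast
  have F1: "span N = M" if "P N" "N \<subseteq> N0" for N
  proof -
    have "dim N0 \<le> dim N" using dmin[OF that(1)] N0 by simp
    then show ?thesis unfolding M_def using that(2) dim_eq_span by blast
  qed
  have F2: "n ** m \<in> M" if "n \<in> N0" "m \<in> M" for n m
  proof -
    have nG: "n \<in> G" using that N0G by auto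
    define N1 where "N1 = {h \<in> G. n ** h \<in> N0} \<inter> N0"
    have "P N1" unfolding N1_def P_def using N0(1) nG that(1) one
      by (auto simp: P_def intro!: openin_Int preimg_open)
    then have sN1: "span N1 = M" using F1 N1_def by auto
    have "n ** m \<in> (\<lambda>h. n ** h) ` span N1" using that(2) sN1 by auto
    also have "\<dots> = span ((\<lambda>h. n ** h) ` N1)" using span_linear_image[OF linear_lmult] by metis
    also have "\<dots> \<subseteq> span N0" by (rule span_mono) (auto simp: N1_def)
    finally show ?thesis by (simp add: M_def)
  qed
  have F3: "y ** m \<in> M" if "y \<in> M" "m \<in> M" for y m
  proof -
    have "subspace {y. y ** m \<in> M}"
      unfolding subspace_def M_def
      by (auto simp: mat_mult_ldist mat_mult_lscale span_add span_mul)
         (metis matrix_scalar_ac scalar_matrix_assoc span_zero zero_less_one mat_mult_lscale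
           scaleR_zero_left)
    moreover have "N0 \<subseteq> {y. y ** m \<in> M}" using F2 that(2) by auto
    ultimately show ?thesis using that(1) unfolding M_def by (metis span_minimal mem_Collect_eq subsetD)
  qed
  have F4: "matrix_inv n \<in> M" if "n \<in> M" "n \<in> G" for n
  proof -
    let ?f = "\<lambda>m. n ** m"
    have inj: "inj_on ?f (span M)"
      by (rule inj_onI) (metis linv[OF that(2)] matrix_mul_assoc matrix_mul_lid)
    have "?f ` M \<subseteq> M" using F3 that(1) by auto
    moreover have "subspace (?f ` M)" unfolding M_def
      by (rule linear_subspace_image[OF linear_lmult subspace_span])
    moreover have "dim (?f ` M) = dim M" using dim_image_eq[OF linear_lmult inj] .
    ultimately have "?f ` M = M" using subspace_dim_equal M_def subspace_span
      by (metis order_refl)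
    moreover have "mat 1 \<in> M" using N0(1) unfolding P_def M_def by (auto intro: span_base)
    ultimately obtain m where "m \<in> M" "n ** m = mat 1" by force
    then have "m = matrix_inv n" using linv[OF that(2)]
      by (metis matrix_mul_assoc matrix_mul_lid matrix_mul_rid)
    then show ?thesis using \<open>m \<in> M\<close> by simp
  qed
  define H where "H = G \<inter> M"
  have N0H: "N0 \<subseteq> H" unfolding H_def M_def using N0G span_base by blast
  have HO: "openin (top_of_set G) H"
  proof (subst openin_subopen, intro ballI)
    fix h assume "h \<in> H"
    then have hG: "h \<in> G" by (simp add: H_def)
    have "(\<lambda>z. h ** z) ` N0 \<subseteq> H" using \<open>h \<in> H\<close> N0H mult F3 unfolding H_def by blast
    moreover have "h \<in> (\<lambda>z. h ** z) ` N0" using N0(1) unfolding P_def by (force intro: image_eqI[of _ _ "mat 1"])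
    ultimately show "\<exists>T. openin (top_of_set G) T \<and> h \<in> T \<and> T \<subseteq> H"
      using transl_open[OF _ hG, of N0] N0(1) unfolding P_def by blast
  qed
  have HC: "openin (top_of_set G) (G - H)"
  proof (subst openin_subopen, intro ballI)
    fix g assume g: "g \<in> G - H"
    have "(\<lambda>z. g ** z) ` N0 \<subseteq> G - H"
    proof safe
      fix z assume z: "z \<in> N0"
      then show "g ** z \<in> G" using g N0G mult by auto
      assume "g ** z \<in> H"
      moreover have "matrix_inv z \<in> H" using z N0H F4 N0G inv unfolding H_def by auto
      ultimately have "g ** z ** matrix_inv z \<in> H" using mult F3 unfolding H_def by auto
      then have "g \<in> H" using rinv z N0G by (auto simp: matrix_mul_assoc[symmetric])
      then show False using g by auto
    qed
    moreover have "g \<in> (\<lambda>z. g ** z) ` N0" using N0(1) unfolding P_def by (force intro: image_eqI[of _ _ "mat 1"])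
    ultimately show "\<exists>T. openin (top_of_set G) T \<and> g \<in> T \<and> T \<subseteq> G - H"
      using transl_open[of N0 g] N0(1) g unfolding P_def by blast
  qed
  have "closedin (top_of_set G) H" using HC unfolding closedin_def H_def by auto
  then have "H = {} \<or> H = G" using conn HO connected_clopen by blast
  moreover have "mat 1 \<in> H" using N0(1) N0H unfolding P_def by auto
  ultimately have GM: "G \<subseteq> M" unfolding H_def by auto
  have "P (N \<inter> N0)" using assms N0(1) unfolding P_def by auto
  then have "span (N \<inter> N0) = M" using F1 by auto
  then show ?thesis using GM span_mono[of "N \<inter> N0" N] by auto
qed

lemma vanish:
  assumes L: "linear L" and W: "openin (top_of_set G) W" "g0 \<in> W"
    and z: "\<And>g. g \<in> W \<Longrightarrow> L g = 0"
  shows "\<forall>g\<in>G. L g = 0"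
proof
  fix g assume gG: "g \<in> G"
  have g0G: "g0 \<in> G" using W openin_imp_subset by blast
  define N where "N = {h \<in> G. g0 ** h \<in> W}"
  have NO: "openin (top_of_set G) N" unfolding N_def using preimg_open[OF W(1) g0G] .
  have "mat 1 \<in> N" unfolding N_def using one W by auto
  then have GN: "G \<subseteq> span N" using span_nbhd NO by blast
  have L': "linear (\<lambda>h. L (g0 ** h))" using linear_compose[OF linear_lmult L] by (simp add: o_def)
  have "\<forall>h\<in>span N. L (g0 ** h) = 0"
    using linear_eq_0_on_span[OF L', of N] by (auto simp: N_def z)
  moreover have "matrix_inv g0 ** g \<in> G" using inv mult g0G gG by auto
  ultimately have "L (g0 ** (matrix_inv g0 ** g)) = 0" using GN by auto
  then show "L g = 0" using rinv[OF g0G] by (simp add: matrix_mul_assoc)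
qed

end


lemma sym_inner:
  assumes "transpose S = (S::real^'n^'n)"
  shows "(S *v x) \<bullet> y = x \<bullet> (S *v y)"
  by (metis assms dot_lmul_matrix transpose_matrix_vector)

lemma real_contra:
  fixes Y E :: real
  assumes "Y > 0" "\<And>t. t > 0 \<Longrightarrow> 2 * t * Y \<le> t\<^sup>2 * E"
  shows False
proof -
  define t where "t = Y / (\<bar>E\<bar> + 1)"
  have tp: "t > 0" using assms(1) by (simp add: t_def)
  have "2 * t * Y \<le> t\<^sup>2 * E" using assms(2) tp by blast
  also have "\<dots> \<le> t\<^sup>2 * \<bar>E\<bar>" by (simp add: mult_left_mono)
  also have "\<dots> < t\<^sup>2 * (\<bar>E\<bar> + 1)" using tp by simp
  also have "\<dots> = t * Y"
  proof -
    have "t * (\<bar>E\<bar> + 1) = Y" by (simp add: t_def)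
    then show ?thesis by (simp add: power2_eq_square mult.assoc)
  qed
  finally have "2 * t * Y < t * Y" .
  moreover have "t * Y > 0" using tp assms(1) by simp
  ultimately show False by linarith
qed

lemma eigvec_exists:
  fixes S :: "real^'n^'n"
  assumes sym: "transpose S = S" and U: "subspace U" and nz: "u1 \<in> U" "u1 \<noteq> 0"
    and inv: "\<And>u. u \<in> U \<Longrightarrow> S *v u \<in> U"
  shows "\<exists>u\<in>U. u \<noteq> 0 \<and> (\<exists>c. S *v u = c *\<^sub>R u)"
proof -
  define Sph where "Sph = U \<inter> sphere 0 1"
  define f where "f = (\<lambda>z. (S *v z) \<bullet> z)"
  have "compact Sph" unfolding Sph_def by (rule closed_Int_compact[OF closed_subspace[OF U]]) simp
  moreover have "u1 /\<^sub>R norm u1 \<in> Sph" using nz U by (simp add: Sph_def subspace_mul)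
  moreover have "continuous_on Sph f" unfolding f_def
    by (intro continuous_on_inner matrix_vector_mult_linear_continuous_on continuous_on_id)
  ultimately obtain u0 where u0: "u0 \<in> Sph" "\<And>z. z \<in> Sph \<Longrightarrow> f z \<le> f u0"
    using continuous_attains_sup[of Sph f] by blast
  define c where "c = f u0"
  have u0U: "u0 \<in> U" and nu0: "norm u0 = 1" using u0 by (auto simp: Sph_def)
  have u0u0: "u0 \<bullet> u0 = 1" using nu0 by (simp add: dot_square_norm)
  have bound: "f z \<le> c * (z \<bullet> z)" if "z \<in> U" for z
  proof (cases "z = 0")
    case True then show ?thesis by (simp add: f_def)
  next
    case False
    then have "z /\<^sub>R norm z \<in> Sph" using that U by (simp add: Sph_def subspace_mul)
    then have "f (z /\<^sub>R norm z) \<le> c" using u0 c_def by auto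
    moreover have "f (z /\<^sub>R norm z) = f z / (z \<bullet> z)"
      by (simp add: f_def matrix_vector_mult_scaleR dot_square_norm power2_eq_square)
         (simp add: divide_inverse inverse_mult_distrib ac_simps)
    moreover have "z \<bullet> z > 0" using False by simp
    ultimately show ?thesis by (simp add: divide_le_eq mult.commute)
  qed
  define y where "y = S *v u0 - c *\<^sub>R u0"
  have yU: "y \<in> U" unfolding y_def using U u0U inv by (simp add: subspace_diff subspace_mul)
  have yu0: "y \<bullet> u0 = 0" unfolding y_def using u0u0 by (simp add: inner_diff_left c_def f_def)
  have Su0y: "(S *v u0) \<bullet> y = y \<bullet> y"
  proof -
    have "S *v u0 = y + c *\<^sub>R u0" by (simp add: y_def)
    moreover have "u0 \<bullet> y = 0" using yu0 by (simp add: inner_commute)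
    ultimately show ?thesis by (simp add: inner_add_left)
  qed
  have Syu0: "(S *v y) \<bullet> u0 = y \<bullet> y" using Su0y sym_inner[OF sym, of y u0]
    by (simp add: inner_commute)
  have y0: "y = 0"
  proof (rule ccontr)
    assume "y \<noteq> 0"
    then have Y: "y \<bullet> y > 0" by simp
    show False
    proof (rule real_contra[OF Y])
      fix t :: real assume "t > 0"
      have zU: "u0 + t *\<^sub>R y \<in> U" using U u0U yU by (simp add: subspace_add subspace_mul)
      have e1: "f (u0 + t *\<^sub>R y) = f u0 + t * ((S *v u0) \<bullet> y) + t * ((S *v y) \<bullet> u0)
          + (t * t) * ((S *v y) \<bullet> y)"
        by (simp add: f_def matrix_vector_right_distrib matrix_vector_mult_scaleR
            inner_add_left inner_add_right distrib_left mult.assoc)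
      have e2: "(u0 + t *\<^sub>R y) \<bullet> (u0 + t *\<^sub>R y) = u0 \<bullet> u0 + t * (u0 \<bullet> y) + t * (y \<bullet> u0) + (t * t) * (y \<bullet> y)"
        by (simp add: inner_add_left inner_add_right distrib_left mult.assoc)
      have "u0 \<bullet> y = 0" using yu0 by (simp add: inner_commute)
      then have "f u0 + t * (y \<bullet> y) + t * (y \<bullet> y) + (t * t) * ((S *v y) \<bullet> y) \<le> c * (1 + (t * t) * (y \<bullet> y))"
        using bound[OF zU] e1 e2 Su0y Syu0 u0u0 yu0 by simp
      then have "2 * t * (y \<bullet> y) \<le> t\<^sup>2 * (c * (y \<bullet> y) - (S *v y) \<bullet> y)"
        unfolding c_def power2_eq_square by (simp add: algebra_simps)
      then       show "2 * t * (y \<bullet> y) \<le> t\<^sup>2 * (c * (y \<bullet> y) - (S *v y) \<bullet> y)" .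
    qed
  qed
  have "S *v u0 = c *\<^sub>R u0" using y0 by (simp add: y_def)
  moreover have "u0 \<noteq> 0" using nu0 by auto
  ultimately show ?thesis using u0U by blast
qed

definition inv_sub :: "(real^'n^'n) set \<Rightarrow> (real^'n) set \<Rightarrow> bool" where
  "inv_sub A W \<longleftrightarrow> subspace W \<and> (\<forall>X\<in>A. \<forall>w\<in>W. X *v w \<in> W)"

locale symcomm =
  fixes A :: "(real^'n^'n) set"
  assumes symm: "\<And>X. X \<in> A \<Longrightarrow> transpose X = X"
    and comm: "\<And>X Y. X \<in> A \<Longrightarrow> Y \<in> A \<Longrightarrow> X ** Y = Y ** X"
begin

lemma joint_eigvec:
  assumes W: "inv_sub A W" "w1 \<in> W" "w1 \<noteq> 0"
  shows "\<exists>u\<in>W. u \<noteq> 0 \<and> (\<forall>X\<in>A. \<exists>c. X *v u = c *\<^sub>R u)"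
proof -
  define P where "P = (\<lambda>U. inv_sub A U \<and> U \<subseteq> W \<and> (\<exists>u\<in>U. u \<noteq> 0))"
  have "P W" using W by (auto simp: P_def)
  then have "\<exists>k. \<exists>U. P U \<and> dim U = k" by blast
  then have "\<exists>U. P U \<and> dim U = (LEAST k. \<exists>U. P U \<and> dim U = k)" by (rule LeastI_ex)
  then obtain U0 where U0: "P U0" "dim U0 = (LEAST k. \<exists>U. P U \<and> dim U = k)" by blast
  have dmin: "dim U0 \<le> dim U" if "P U" for U using U0(2) that by (auto intro: Least_le)
  obtain u where u: "u \<in> U0" "u \<noteq> 0" using U0(1) by (auto simp: P_def)
  have "\<exists>c. X *v u = c *\<^sub>R u" if X: "X \<in> A" for X
  proof -
    have sU0: "subspace U0" and iU0: "\<And>Y w. Y \<in> A \<Longrightarrow> w \<in> U0 \<Longrightarrow> Y *v w \<in> U0"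
      using U0(1) by (auto simp: P_def inv_sub_def)
    obtain e c where e: "e \<in> U0" "e \<noteq> 0" "X *v e = c *\<^sub>R e"
      using eigvec_exists[OF symm[OF X] sU0 u] iU0[OF X] by blast
    define E where "E = {z \<in> U0. X *v z = c *\<^sub>R z}"
    have sE: "subspace E" unfolding E_def subspace_def using sU0
      by (simp add: subspace_def matrix_vector_right_distrib matrix_vector_mult_scaleR scaleR_add_right)
    have "inv_sub A E" unfolding inv_sub_def
    proof (intro conjI sE ballI)
      fix Y w assume Y: "Y \<in> A" and w: "w \<in> E"
      have "X *v (Y *v w) = Y *v (X *v w)" using comm[OF X Y] by (simp add: matrix_vector_mul_assoc)
      also have "\<dots> = c *\<^sub>R (Y *v w)" using w by (simp add: E_def matrix_vector_mult_scaleR)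
      finally show "Y *v w \<in> E" using iU0[OF Y] w by (auto simp: E_def)
    qed
    then have "P E" using e U0(1) by (auto simp: P_def E_def)
    then have "dim U0 \<le> dim E" by (rule dmin)
    moreover have "E \<subseteq> U0" by (auto simp: E_def)
    ultimately have "E = U0" using subspace_dim_equal sE sU0 by blast
    then show ?thesis using u(1) by (auto simp: E_def)
  qed
  moreover have "u \<in> W" using u(1) U0(1) unfolding P_def by blast
  ultimately show ?thesis using u(2) by blast
qed

lemma joint_basis:
  "inv_sub A W \<Longrightarrow> \<exists>B. B \<subseteq> W \<and> finite B \<and> pairwise orthogonal B \<and> (\<forall>b\<in>B. norm b = 1)
     \<and> span B = W \<and> (\<forall>b\<in>B. \<forall>X\<in>A. \<exists>c. X *v b = c *\<^sub>R b)"
proof (induction "dim W" arbitrary: W rule: less_induct)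
  case less
  have sW: "subspace W" using less.prems by (simp add: inv_sub_def)
  show ?case
  proof (cases "\<exists>w\<in>W. w \<noteq> 0")
    case False
    then have "W = {0}" using subspace_0[OF sW] by auto
    then show ?thesis by (intro exI[of _ "{}"]) auto
  next
    case True
    then obtain u where u: "u \<in> W" "u \<noteq> 0" "\<forall>X\<in>A. \<exists>c. X *v u = c *\<^sub>R u"
      using joint_eigvec[OF less.prems] by blast
    define b where "b = u /\<^sub>R norm u"
    have bW: "b \<in> W" using u sW by (simp add: b_def subspace_mul)
    have nb: "norm b = 1" using u by (simp add: b_def)
    have bb: "b \<bullet> b = 1" using nb by (simp add: dot_square_norm)
    have beig: "\<forall>X\<in>A. \<exists>c. X *v b = c *\<^sub>R b" using u(3)
      by (auto simp: b_def matrix_vector_mult_scaleR)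
    define W' where "W' = {w \<in> W. b \<bullet> w = 0}"
    have sW': "subspace W'" using sW unfolding W'_def subspace_def
      by (auto simp: inner_add_right)
    have "inv_sub A W'" unfolding inv_sub_def
    proof (intro conjI sW' ballI)
      fix X w assume X: "X \<in> A" and w: "w \<in> W'"
      obtain c where c: "X *v b = c *\<^sub>R b" using beig X by blast
      have "b \<bullet> (X *v w) = (X *v b) \<bullet> w" using sym_inner[OF symm[OF X]] by simp
      also have "\<dots> = 0" using c w by (simp add: W'_def)
      finally show "X *v w \<in> W'" using w X less.prems by (auto simp: W'_def inv_sub_def)
    qed
    moreover have "dim W' < dim W"
    proof -
      have "b \<notin> W'" using bb by (simp add: W'_def)
      moreover have "W' \<subseteq> W" by (auto simp: W'_def)
      ultimately have "W' \<subset> W" using bW by blast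
      then have "span W' \<subset> span W"
        by (simp only: span_eq_iff[THEN iffD2, OF sW] span_eq_iff[THEN iffD2, OF sW'])
      then show ?thesis by (rule dim_psubset)
    qed
    ultimately obtain B' where B': "B' \<subseteq> W'" "finite B'" "pairwise orthogonal B'" "\<forall>b\<in>B'. norm b = 1"
      "span B' = W'" "\<forall>b\<in>B'. \<forall>X\<in>A. \<exists>c. X *v b = c *\<^sub>R b"
      using less.hyps by blast
    have orthb: "orthogonal b x" if "x \<in> B'" for x using that B'(1) by (auto simp: W'_def orthogonal_def)
    show ?thesis
    proof (intro exI[of _ "insert b B'"] conjI)
      show "insert b B' \<subseteq> W" using bW B'(1) by (auto simp: W'_def)
      show "finite (insert b B')" using B'(2) by simp
      show "pairwise orthogonal (insert b B')" using B'(3) orthb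
        by (auto simp: pairwise_insert orthogonal_commute)
      show "\<forall>x\<in>insert b B'. norm x = 1" using nb B'(4) by auto
      show "\<forall>x\<in>insert b B'. \<forall>X\<in>A. \<exists>c. X *v x = c *\<^sub>R x" using beig B'(6) by auto
      show "span (insert b B') = W"
      proof
        show "span (insert b B') \<subseteq> W" using bW B'(1) sW
          by (intro span_minimal) (auto simp: W'_def)
        show "W \<subseteq> span (insert b B')"
        proof
          fix w assume w: "w \<in> W"
          have "w - (b \<bullet> w) *\<^sub>R b \<in> W'" using w bW sW bb
            by (simp add: W'_def subspace_diff subspace_mul inner_diff_right)
          then have "w - (b \<bullet> w) *\<^sub>R b \<in> span (insert b B')" using B'(5)
            by (metis span_mono subset_insertI subsetD)
          moreover have "(b \<bullet> w) *\<^sub>R b \<in> span (insert b B')" by (simp add: span_base span_mul)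
          ultimately have "(w - (b \<bullet> w) *\<^sub>R b) + (b \<bullet> w) *\<^sub>R b \<in> span (insert b B')"
            by (rule span_add)
          then show "w \<in> span (insert b B')" by simp
        qed
      qed
    qed
  qed
qed

end

lemma orth_expand:
  fixes B :: "'a::euclidean_space set"
  assumes "finite B" "pairwise orthogonal B" "\<forall>b\<in>B. norm b = 1" "x \<in> span B"
  shows "x = (\<Sum>b\<in>B. (b \<bullet> x) *\<^sub>R b)"
proof -
  have bb: "b' \<bullet> b = (if b = b' then 1 else 0)" if "b \<in> B" "b' \<in> B" for b b'
    using that assms(2,3) by (auto simp: pairwise_def orthogonal_def dot_square_norm)
  define y where "y = x - (\<Sum>b\<in>B. (b \<bullet> x) *\<^sub>R b)"
  have "orthogonal y b'" if "b' \<in> B" for b'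
  proof -
    have "b' \<bullet> (\<Sum>b\<in>B. (b \<bullet> x) *\<^sub>R b) = (\<Sum>b\<in>B. (b \<bullet> x) * (if b = b' then 1 else 0))"
      by (simp add: inner_sum_right bb that cong: sum.cong)
    also have "\<dots> = b' \<bullet> x" using that assms(1) by (simp add: if_distrib sum.delta' cong: if_cong)
    finally show ?thesis by (simp add: y_def orthogonal_def inner_diff_right inner_commute)
  qed
  moreover have "y \<in> span B" unfolding y_def using assms(4)
    by (simp add: span_diff span_sum span_mul span_base)
  ultimately have "orthogonal y y" using orthogonal_to_span by (metis orthogonal_commute)
  then have "y = 0" by (simp add: orthogonal_def)
  then show ?thesis by (simp add: y_def)
qed



lemma sum_matvec: "finite S \<Longrightarrow> (sum f S) *v x = (\<Sum>i\<in>S. f i *v x)"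
  by (induction S rule: finite_induct) (simp_all add: matrix_vector_mult_add_rdistrib)

lemma matpow_Suc: "matpow X (Suc k) = X ** matpow X k"
  by (simp add: matpow_def)

lemma matpow_0: "matpow X 0 = mat 1"
  by (simp add: matpow_def)

locale ebasis =
  fixes a :: "(real^'n^'n) set" and B :: "(real^'n) set"
  assumes fin: "finite B" and orth: "pairwise orthogonal B" and nrm: "\<forall>b\<in>B. norm b = 1"
    and spn: "span B = UNIV"
    and eig: "\<forall>b\<in>B. \<forall>X\<in>a. \<exists>c. X *v b = c *\<^sub>R b"
begin

definition lam :: "real^'n \<Rightarrow> real^'n^'n \<Rightarrow> real" where
  "lam b X = b \<bullet> (X *v b)"

lemma expand: "x = (\<Sum>b\<in>B. (b \<bullet> x) *\<^sub>R b)"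
  using orth_expand[OF fin orth nrm] spn by auto

lemma bb: "b \<in> B \<Longrightarrow> b' \<in> B \<Longrightarrow> b' \<bullet> b = (if b = b' then 1 else 0)"
  using orth nrm by (auto simp: pairwise_def orthogonal_def dot_square_norm)

lemma coord: "b' \<in> B \<Longrightarrow> b' \<bullet> (\<Sum>b\<in>B. f b *\<^sub>R b) = f b'"
proof -
  assume b': "b' \<in> B"
  have "b' \<bullet> (\<Sum>b\<in>B. f b *\<^sub>R b) = (\<Sum>b\<in>B. f b * (if b = b' then 1 else 0))"
    by (simp add: inner_sum_right bb b' cong: sum.cong)
  also have "\<dots> = f b'" using b' fin by (simp add: if_distrib sum.delta' cong: if_cong)
  finally show ?thesis .
qed

lemma eigv: "b \<in> B \<Longrightarrow> X \<in> a \<Longrightarrow> X *v b = lam b X *\<^sub>R b"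
proof -
  assume b: "b \<in> B" and X: "X \<in> a"
  obtain c where c: "X *v b = c *\<^sub>R b" using eig b X by blast
  have "b \<bullet> b = 1" using nrm b by (simp add: dot_square_norm)
  then have "lam b X = c" by (simp add: lam_def c)
  then show ?thesis using c by simp
qed

lemma lam_add: "lam b (X + Y) = lam b X + lam b Y"
  by (simp add: lam_def matrix_vector_mult_add_rdistrib inner_add_right)

lemma lam_scale: "lam b (c *\<^sub>R X) = c * lam b X"
  by (simp add: lam_def scaleR_matrix_vector_assoc[symmetric])

lemma matvec_a: "X \<in> a \<Longrightarrow> X *v x = (\<Sum>b\<in>B. (lam b X * (b \<bullet> x)) *\<^sub>R b)"
proof -
  assume X: "X \<in> a"
  have "X *v x = X *v (\<Sum>b\<in>B. (b \<bullet> x) *\<^sub>R b)" using expand by metis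
  also have "\<dots> = (\<Sum>b\<in>B. (b \<bullet> x) *\<^sub>R (X *v b))" by (simp add: vec.sum matrix_vector_mult_scaleR)
  also have "\<dots> = (\<Sum>b\<in>B. (lam b X * (b \<bullet> x)) *\<^sub>R b)" using X by (simp add: eigv mult.commute cong: sum.cong)
  finally show ?thesis .
qed

lemma matpow_a: "X \<in> a \<Longrightarrow> matpow X k *v x = (\<Sum>b\<in>B. ((lam b X)^k * (b \<bullet> x)) *\<^sub>R b)"
proof (induction k arbitrary: x)
  case 0
  then show ?case using expand by (simp add: matpow_0)
next
  case (Suc k)
  have "matpow X (Suc k) *v x = X *v (matpow X k *v x)" by (simp add: matpow_Suc matrix_vector_mul_assoc)
  also have "\<dots> = (\<Sum>b\<in>B. (lam b X * (b \<bullet> (matpow X k *v x))) *\<^sub>R b)" using matvec_a Suc.prems by blast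
  also have "\<dots> = (\<Sum>b\<in>B. ((lam b X)^(Suc k) * (b \<bullet> x)) *\<^sub>R b)"
    using Suc.IH Suc.prems by (simp add: coord mult.assoc cong: sum.cong)
  finally show ?case .
qed

definition Pm :: "real^'n \<Rightarrow> real^'n^'n" where
  "Pm b = (\<chi> i j. b$i * b$j)"

lemma Pm_vec: "Pm b *v x = (b \<bullet> x) *\<^sub>R b"
proof -
  have "(Pm b *v x) $ i = b$i * (\<Sum>j\<in>UNIV. b$j * x$j)" for i
    by (simp add: Pm_def matrix_vector_mult_def sum_distrib_left mult.assoc)
  moreover have "b \<bullet> x = (\<Sum>j\<in>UNIV. b$j * x$j)" by (simp add: inner_vec_def)
  ultimately show ?thesis by (simp add: vec_eq_iff mult.commute)
qed

lemma sum_Pm_vec: "(\<Sum>b\<in>B. f b *\<^sub>R Pm b) *v x = (\<Sum>b\<in>B. (f b * (b \<bullet> x)) *\<^sub>R b)"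
  by (simp add: sum_matvec[OF fin] scaleR_matrix_vector_assoc[symmetric] Pm_vec)

lemma matpow_Pm: "X \<in> a \<Longrightarrow> matpow X k = (\<Sum>b\<in>B. (lam b X ^ k) *\<^sub>R Pm b)"
  by (subst matrix_eq) (simp add: sum_Pm_vec matpow_a)

lemma mexp_Pm: "X \<in> a \<Longrightarrow> mexp X = (\<Sum>b\<in>B. exp (lam b X) *\<^sub>R Pm b)"
proof -
  assume X: "X \<in> a"
  have "(\<lambda>k. (1 / fact k) *\<^sub>R matpow X k) = (\<lambda>k. \<Sum>b\<in>B. (lam b X ^ k /\<^sub>R fact k) *\<^sub>R Pm b)"
  proof
    fix k
    have "(1 / fact k) *\<^sub>R matpow X k = (\<Sum>b\<in>B. ((1 / fact k) * lam b X ^ k) *\<^sub>R Pm b)"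
      by (simp only: matpow_Pm[OF X] scaleR_sum_right scaleR_scaleR)
    also have "\<dots> = (\<Sum>b\<in>B. (lam b X ^ k /\<^sub>R fact k) *\<^sub>R Pm b)"
      by (intro sum.cong refl) (simp add: divide_inverse mult.commute)
    finally show "(1 / fact k) *\<^sub>R matpow X k = (\<Sum>b\<in>B. (lam b X ^ k /\<^sub>R fact k) *\<^sub>R Pm b)" .
  qed
  moreover have "(\<lambda>k. \<Sum>b\<in>B. (lam b X ^ k /\<^sub>R fact k) *\<^sub>R Pm b) sums (\<Sum>b\<in>B. exp (lam b X) *\<^sub>R Pm b)"
  proof (rule sums_sum)
    fix b
    show "(\<lambda>k. (lam b X ^ k /\<^sub>R fact k) *\<^sub>R Pm b) sums (exp (lam b X) *\<^sub>R Pm b)"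
      by (rule sums_scaleR_left[OF exp_converges])
  qed
  ultimately have "(\<lambda>k. (1 / fact k) *\<^sub>R matpow X k) sums (\<Sum>b\<in>B. exp (lam b X) *\<^sub>R Pm b)"
    by simp
  then show ?thesis unfolding mexp_def by (rule sums_unique[symmetric])
qed

lemma mexp_vec: "X \<in> a \<Longrightarrow> mexp X *v x = (\<Sum>b\<in>B. (exp (lam b X) * (b \<bullet> x)) *\<^sub>R b)"
  by (simp add: mexp_Pm sum_Pm_vec)

lemma mexp_coord: "X \<in> a \<Longrightarrow> b \<in> B \<Longrightarrow> b \<bullet> (mexp X *v x) = exp (lam b X) * (b \<bullet> x)"
  by (simp add: mexp_vec coord)

lemma quad: "X \<in> a \<Longrightarrow> (X *v x) \<bullet> x = (\<Sum>b\<in>B. lam b X * (b \<bullet> x)\<^sup>2)"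
proof -
  assume X: "X \<in> a"
  have "(X *v x) \<bullet> x = (\<Sum>b\<in>B. (lam b X * (b \<bullet> x)) *\<^sub>R b) \<bullet> x"
    using matvec_a[OF X, of x] by (rule arg_cong[where f="\<lambda>y. y \<bullet> x"])
  also have "\<dots> = (\<Sum>b\<in>B. lam b X * (b \<bullet> x)\<^sup>2)"
    by (simp add: inner_sum_left power2_eq_square mult.assoc)
  finally show ?thesis .
qed

lemma norm2: "x \<bullet> x = (\<Sum>b\<in>B. (b \<bullet> x)\<^sup>2)"
proof -
  have "x \<bullet> x = (\<Sum>b\<in>B. (b \<bullet> x) *\<^sub>R b) \<bullet> x"
    using expand[of x] by (rule arg_cong[where f="\<lambda>y. y \<bullet> x"])
  also have "\<dots> = (\<Sum>b\<in>B. (b \<bullet> x)\<^sup>2)" by (simp add: inner_sum_left power2_eq_square)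
  finally show ?thesis .
qed

end


lemma lin_on_zero:
  assumes "subspace a" "\<forall>\<xi>\<in>a. \<forall>\<eta>\<in>a. \<forall>c::real. l (c *\<^sub>R \<xi> + \<eta>) = c * l \<xi> + l \<eta>"
  shows "l 0 = 0"
proof -
  have "l (1 *\<^sub>R 0 + 0) = 1 * l 0 + l 0" using assms subspace_0 by blast
  then show ?thesis by simp
qed

lemma lin_on_sum:
  assumes a: "subspace a" and l: "\<forall>\<xi>\<in>a. \<forall>\<eta>\<in>a. \<forall>c::real. l (c *\<^sub>R \<xi> + \<eta>) = c * l \<xi> + l \<eta>"
  shows "finite F \<Longrightarrow> F \<subseteq> a \<Longrightarrow> l (\<Sum>e\<in>F. c e *\<^sub>R e) = (\<Sum>e\<in>F. c e * l e)"
proof (induction F rule: finite_induct)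
  case empty
  then show ?case using lin_on_zero[OF a l] by simp
next
  case (insert x F)
  have "(\<Sum>e\<in>F. c e *\<^sub>R e) \<in> a" using insert.prems a
    by (intro subspace_sum subspace_mul) auto
  then show ?case using insert l by auto
qed

lemma riesz:
  fixes a :: "'a::euclidean_space set"
  assumes a: "subspace a" and l: "\<forall>\<xi>\<in>a. \<forall>\<eta>\<in>a. \<forall>c::real. l (c *\<^sub>R \<xi> + \<eta>) = c * l \<xi> + l \<eta>"
  shows "\<exists>r\<in>a. \<forall>\<xi>\<in>a. l \<xi> = \<xi> \<bullet> r"
proof -
  obtain E where E: "E \<subseteq> a" "pairwise orthogonal E" "\<And>x. x \<in> E \<Longrightarrow> norm x = 1"
    "independent E" "span E = a"
    using orthonormal_basis_subspace[OF a] by metis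
  have fE: "finite E" using E(4) independent_imp_finite by blast
  define r where "r = (\<Sum>e\<in>E. l e *\<^sub>R e)"
  have ra: "r \<in> a" unfolding r_def using E(1) a by (intro subspace_sum subspace_mul) auto
  have "l \<xi> = \<xi> \<bullet> r" if "\<xi> \<in> a" for \<xi>
  proof -
    have xe: "\<xi> = (\<Sum>e\<in>E. (e \<bullet> \<xi>) *\<^sub>R e)" using orth_expand[OF fE E(2)] E(3,5) that by auto
    have "l \<xi> = (\<Sum>e\<in>E. (e \<bullet> \<xi>) * l e)" by (subst xe, rule lin_on_sum[OF a l fE E(1)])
    also have "\<dots> = \<xi> \<bullet> r" by (simp add: r_def inner_sum_right inner_commute mult.commute)
    finally show ?thesis .
  qed
  then show ?thesis using ra by blast
qed

lemma convex_cone_hull_sum: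
  assumes "finite J" "\<forall>j\<in>J. t j \<ge> 0" "q ` J \<subseteq> S"
  shows "(\<Sum>j\<in>J. t j *\<^sub>R q j) \<in> convex_cone hull S"
  using assms
proof (induction J rule: finite_induct)
  case empty
  then show ?case by (simp add: convex_cone_hull_contains_0)
next
  case (insert x F)
  let ?K = "convex_cone hull S"
  have A: "t x *\<^sub>R q x \<in> ?K" using insert.prems conic_convex_cone_hull[of S]
    by (auto simp: conic_def intro: hull_inc)
  have B: "(\<Sum>j\<in>F. t j *\<^sub>R q j) \<in> ?K" using insert by auto
  have "(1/2::real) *\<^sub>R (t x *\<^sub>R q x) + (1/2::real) *\<^sub>R (\<Sum>j\<in>F. t j *\<^sub>R q j) \<in> ?K"
    by (rule convexD[OF convex_convex_cone_hull A B]) auto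
  then have "2 *\<^sub>R ((1/2) *\<^sub>R (t x *\<^sub>R q x) + (1/2) *\<^sub>R (\<Sum>j\<in>F. t j *\<^sub>R q j)) \<in> ?K"
    using conic_convex_cone_hull[of S] by (auto simp: conic_def)
  then show ?case using insert by (simp add: scaleR_add_right)
qed

lemma convex_cone_hull_char:
  fixes q :: "'j \<Rightarrow> 'a::real_vector"
  assumes "finite J"
  shows "convex_cone hull (q ` J) = {\<Sum>j\<in>J. t j *\<^sub>R q j | t. \<forall>j. t j \<ge> (0::real)}"
    (is "_ = ?S")
proof
  show "?S \<subseteq> convex_cone hull (q ` J)"
    using convex_cone_hull_sum[OF assms] by auto
  show "convex_cone hull (q ` J) \<subseteq> ?S"
  proof (rule hull_minimal)
    show "q ` J \<subseteq> ?S"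
    proof
      fix y assume "y \<in> q ` J"
      then obtain i where i: "i \<in> J" "y = q i" by blast
      have "(\<Sum>j\<in>J. (if j = i then 1 else 0) *\<^sub>R q j) = q i"
        using assms i(1) by (simp add: if_distrib[of "\<lambda>c. c *\<^sub>R _"] sum.delta' cong: if_cong)
      then show "y \<in> ?S" using i by (intro CollectI exI[of _ "\<lambda>j. if j = i then 1 else 0"]) auto
    qed
    show "convex_cone ?S"
      unfolding convex_cone_def
    proof (intro conjI)
      show "?S \<noteq> {}" by (auto intro!: exI[of _ "\<lambda>j. 0"])
      show "convex ?S"
      proof (rule convexI)
        fix x y :: 'a and u v :: real
        assume "x \<in> ?S" "y \<in> ?S" "0 \<le> u" "0 \<le> v" "u + v = 1"
        then obtain t s where ts: "\<forall>j. t j \<ge> 0" "\<forall>j. s j \<ge> 0" "x = (\<Sum>j\<in>J. t j *\<^sub>R q j)" "y = (\<Sum>j\<in>J. s j *\<^sub>R q j)"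
          by auto
        have "u *\<^sub>R x + v *\<^sub>R y = (\<Sum>j\<in>J. (u * t j + v * s j) *\<^sub>R q j)"
          using ts by (simp add: scaleR_sum_right sum.distrib scaleR_add_left)
        moreover have "\<forall>j. u * t j + v * s j \<ge> 0" using ts \<open>0 \<le> u\<close> \<open>0 \<le> v\<close> by simp
        ultimately have "\<exists>t'. u *\<^sub>R x + v *\<^sub>R y = (\<Sum>j\<in>J. t' j *\<^sub>R q j) \<and> (\<forall>j. 0 \<le> t' j)"
          by (intro exI[of _ "\<lambda>j. u * t j + v * s j"]) simp
        then show "u *\<^sub>R x + v *\<^sub>R y \<in> ?S" by simp
      qed
      show "conic ?S" unfolding conic_def
      proof (intro allI impI)
        fix x and c :: real assume "x \<in> ?S" "0 \<le> c"
        then obtain t where t: "\<forall>j. t j \<ge> 0" "x = (\<Sum>j\<in>J. t j *\<^sub>R q j)" by auto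
        have "c *\<^sub>R x = (\<Sum>j\<in>J. (c * t j) *\<^sub>R q j)" using t by (simp add: scaleR_sum_right)
        moreover have "\<forall>j. c * t j \<ge> 0" using t \<open>0 \<le> c\<close> by simp
        ultimately have "\<exists>t'. c *\<^sub>R x = (\<Sum>j\<in>J. t' j *\<^sub>R q j) \<and> (\<forall>j. 0 \<le> t' j)"
          by (intro exI[of _ "\<lambda>j. c * t j"]) simp
        then show "c *\<^sub>R x \<in> ?S" by simp
      qed
    qed
  qed
qed

lemma polyhedral_cone:
  fixes a :: "(real^'n^'n) set" and q :: "'j \<Rightarrow> real^'n^'n"
  assumes a: "subspace a" and J: "finite J" and qa: "\<forall>j\<in>J. q j \<in> a"
  shows "polyhedral a {(\<lambda>\<xi>. if \<xi> \<in> a then (\<Sum>j\<in>J. t j * (\<xi> \<bullet> q j)) else 0) | t. \<forall>j. t j \<ge> 0}"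
proof -
  define K where "K = convex_cone hull (q ` J)"
  have "polyhedron K" unfolding K_def using J by (simp add: polyhedron_convex_cone_hull)
  then obtain F where F: "finite F" "K = \<Inter> F" "\<forall>h\<in>F. \<exists>\<alpha> \<beta>. \<alpha> \<noteq> 0 \<and> h = {x. \<alpha> \<bullet> x \<le> \<beta>}"
    unfolding polyhedron_def by blast
  then obtain \<alpha> \<beta> where ab: "\<And>h. h \<in> F \<Longrightarrow> h = {x. \<alpha> h \<bullet> x \<le> \<beta> h}" by metis
  have K0: "0 \<in> K" unfolding K_def by (rule convex_cone_hull_contains_0)
  have Kc: "conic K" unfolding K_def by (rule conic_convex_cone_hull)
  have Kchar: "x \<in> K \<longleftrightarrow> (\<forall>h\<in>F. \<alpha> h \<bullet> x \<le> 0)" for x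
  proof
    assume x: "x \<in> K"
    show "\<forall>h\<in>F. \<alpha> h \<bullet> x \<le> 0"
    proof (intro ballI, rule ccontr)
      fix h assume h: "h \<in> F" and "\<not> \<alpha> h \<bullet> x \<le> 0"
      then have pos: "\<alpha> h \<bullet> x > 0" by simp
      define s where "s = (\<bar>\<beta> h\<bar> + 1) / (\<alpha> h \<bullet> x)"
      have "s \<ge> 0" using pos by (simp add: s_def)
      then have "s *\<^sub>R x \<in> K" using Kc x by (simp add: conic_def)
      then have "s *\<^sub>R x \<in> h" using F(2) h by auto
      then have "\<alpha> h \<bullet> (s *\<^sub>R x) \<le> \<beta> h" using ab[OF h] by blast
      moreover have "\<alpha> h \<bullet> (s *\<^sub>R x) = \<bar>\<beta> h\<bar> + 1" using pos by (simp add: s_def)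
      ultimately show False by simp
    qed
  next
    assume H: "\<forall>h\<in>F. \<alpha> h \<bullet> x \<le> 0"
    have "x \<in> h" if h: "h \<in> F" for h
    proof -
      have "0 \<in> h" using K0 F(2) h by auto
      then have "0 \<in> {x. \<alpha> h \<bullet> x \<le> \<beta> h}" using ab[OF h] by blast
      then have "0 \<le> \<beta> h" by simp
      then have "x \<in> {x. \<alpha> h \<bullet> x \<le> \<beta> h}" using H h by force
      then show ?thesis using ab[OF h] by blast
    qed
    then show "x \<in> K" using F(2) by auto
  qed
  have "\<forall>h\<in>F. \<exists>r\<in>a. \<forall>\<xi>\<in>a. \<xi> \<bullet> \<alpha> h = \<xi> \<bullet> r"
    using riesz[OF a] by (simp add: inner_add_left)
  then obtain r where r: "\<And>h. h \<in> F \<Longrightarrow> r h \<in> a" "\<And>h \<xi>. h \<in> F \<Longrightarrow> \<xi> \<in> a \<Longrightarrow> \<xi> \<bullet> \<alpha> h = \<xi> \<bullet> r h"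
    by metis
  have Kform: "K = {\<Sum>j\<in>J. t j *\<^sub>R q j | t. \<forall>j. t j \<ge> (0::real)}"
    unfolding K_def by (rule convex_cone_hull_char[OF J])
  define f where "f = (\<lambda>t \<xi>. if \<xi> \<in> a then (\<Sum>j\<in>J. t j * (\<xi> \<bullet> q j)) else (0::real))"
  have frep: "\<xi> \<in> a \<Longrightarrow> f t \<xi> = \<xi> \<bullet> (\<Sum>j\<in>J. t j *\<^sub>R q j)" for t \<xi>
    by (simp add: f_def inner_sum_right)
  have inc1: "f t \<in> adual a \<and> (\<forall>\<xi>\<in>r ` F. f t \<xi> \<le> 0)" if t: "\<forall>j. 0 \<le> t j" for t
  proof (intro conjI ballI)
    show "f t \<in> adual a" unfolding adual_def
    proof (intro CollectI conjI allI impI ballI)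
      fix \<xi> assume "\<xi> \<notin> a" then show "f t \<xi> = 0" by (simp add: f_def)
    next
      fix \<xi> \<eta> and c :: real assume "\<xi> \<in> a" "\<eta> \<in> a"
      moreover then have "c *\<^sub>R \<xi> + \<eta> \<in> a" using a by (simp add: subspace_add subspace_mul)
      ultimately show "f t (c *\<^sub>R \<xi> + \<eta>) = c * f t \<xi> + f t \<eta>"
        by (simp add: frep inner_add_left)
    qed
    fix \<xi> assume "\<xi> \<in> r ` F"
    then obtain h where h: "h \<in> F" "\<xi> = r h" by blast
    define \<rho> where "\<rho> = (\<Sum>j\<in>J. t j *\<^sub>R q j)"
    have \<rho>a: "\<rho> \<in> a" unfolding \<rho>_def using qa a by (intro subspace_sum subspace_mul) auto
    have "\<rho> \<in> K" using Kform t \<rho>_def by blast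
    then have "\<alpha> h \<bullet> \<rho> \<le> 0" using Kchar h(1) by blast
    moreover have "f t \<xi> = \<rho> \<bullet> \<alpha> h" using h r(2)[OF h(1) \<rho>a] r(1)[OF h(1)]
      by (simp add: frep \<rho>_def[symmetric] inner_commute)
    ultimately show "f t \<xi> \<le> 0" by (simp add: inner_commute)
  qed
  have inc2: "\<exists>t. l = f t \<and> (\<forall>j. 0 \<le> t j)" if l: "l \<in> adual a" "\<forall>\<xi>\<in>r ` F. l \<xi> \<le> 0" for l
  proof -
    have lin: "\<forall>\<xi>\<in>a. \<forall>\<eta>\<in>a. \<forall>c::real. l (c *\<^sub>R \<xi> + \<eta>) = c * l \<xi> + l \<eta>"
      using l(1) by (simp add: adual_def)
    obtain \<rho> where \<rho>: "\<rho> \<in> a" "\<forall>\<xi>\<in>a. l \<xi> = \<xi> \<bullet> \<rho>" using riesz[OF a lin] by blast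
    have "\<alpha> h \<bullet> \<rho> \<le> 0" if h: "h \<in> F" for h
    proof -
      have "\<alpha> h \<bullet> \<rho> = \<rho> \<bullet> r h" using r(2)[OF h \<rho>(1)] by (simp add: inner_commute)
      also have "\<dots> = l (r h)" using \<rho>(2) r(1)[OF h] by (simp add: inner_commute)
      also have "\<dots> \<le> 0" using l(2) h by blast
      finally show ?thesis .
    qed
    then have "\<rho> \<in> K" using Kchar by blast
    then obtain t where t: "\<forall>j. t j \<ge> 0" "\<rho> = (\<Sum>j\<in>J. t j *\<^sub>R q j)" using Kform by blast
    have "l = f t"
    proof
      fix \<xi> show "l \<xi> = f t \<xi>"
      proof (cases "\<xi> \<in> a")
        case True then show ?thesis using \<rho>(2) t(2) by (simp add: frep)
      next
        case False then show ?thesis using l(1) by (simp add: adual_def f_def)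
      qed
    qed
    then show ?thesis using t(1) by blast
  qed
  have "{f t | t. \<forall>j. t j \<ge> 0} = {l \<in> adual a. \<forall>\<xi>\<in>r ` F. l \<xi> \<le> 0}"
    using inc1 inc2 by blast
  moreover have "finite (r ` F)" using F(1) by simp
  moreover have "r ` F \<subseteq> a" using r(1) by auto
  ultimately show ?thesis unfolding polyhedral_def f_def by blast
qed



lemma lowb:
  fixes c t :: real
  assumes "c \<noteq> 0" "t \<ge> 0"
  shows "\<exists>L. \<forall>s. L \<le> (1/4) * (exp s * c)\<^sup>2 - t * s"
proof (cases "t = 0")
  case True then show ?thesis by (intro exI[of _ 0]) simp
next
  case False
  then have tp: "t > 0" using assms(2) by simp
  define P where "P = c\<^sup>2 / 4"
  have Pp: "P > 0" using assms(1) by (simp add: P_def)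
  define K where "K = t / (2 * P)"
  have Kp: "K > 0" using tp Pp by (simp add: K_def)
  have "t * s + (t/2) * (1 - ln K) \<le> (1/4) * (exp s * c)\<^sup>2" for s
  proof -
    have e: "exp (2 * s) = K * exp (2 * s - ln K)" using Kp by (simp add: exp_diff)
    have "K * (1 + (2 * s - ln K)) \<le> K * exp (2 * s - ln K)"
      using Kp exp_ge_add_one_self by (simp add: mult_left_mono)
    then have "K * (1 + (2 * s - ln K)) \<le> exp (2 * s)" using e by simp
    then have "P * (K * (1 + (2 * s - ln K))) \<le> P * exp (2 * s)" using Pp by (simp add: mult_left_mono)
    moreover have "P * K = t / 2" using Pp by (simp add: K_def)
    moreover have "exp (2 * s) = exp s * exp s" by (metis exp_add mult_2)
    then have "(1/4) * (exp s * c)\<^sup>2 = P * exp (2 * s)"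
      by (simp add: P_def power2_eq_square)
    moreover have "P * (K * (1 + (2 * s - ln K))) = (P * K) * (1 + (2 * s - ln K))" by (simp only: mult.assoc)
    moreover have "(t / 2) * (1 + (2 * s - ln K)) = t * s + (t/2) * (1 - ln K)" by (simp add: field_simps)
    ultimately show ?thesis by simp
  qed
  then show ?thesis by (intro exI[of _ "(t/2) * (1 - ln K)"]) (auto simp: algebra_simps)
qed

context ebasis
begin

lemma coord_zero_closure:
  assumes "b \<in> B" "b \<bullet> v = 0"
  shows "\<forall>w\<in>closure (orbit (mexp ` a) v). b \<bullet> w = 0"
proof -
  have "orbit (mexp ` a) v \<subseteq> {u. b \<bullet> u = 0}"
    using assms by (auto simp: orbit_def mexp_coord)
  then have "closure (orbit (mexp ` a) v) \<subseteq> {u. b \<bullet> u = 0}"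
    by (rule closure_minimal) (rule closed_hyperplane)
  then show ?thesis by auto
qed

lemma surj_cone:
  assumes a: "subspace a" and J: "J \<subseteq> B" and vJ: "\<forall>b\<in>J. b \<bullet> v \<noteq> 0"
    and vnJ: "\<forall>b\<in>B-J. b \<bullet> v = 0" and t: "\<forall>b. t b \<ge> 0"
  shows "\<exists>w\<in>closure (orbit (mexp ` a) v). \<forall>\<eta>\<in>a. (\<eta> *v w) \<bullet> w = (\<Sum>b\<in>J. t b * lam b \<eta>)"
proof -
  have fJ: "finite J" using J fin finite_subset by blast
  define H where "H = (\<lambda>\<xi>. \<Sum>b\<in>J. (1/2) * (exp (lam b \<xi>) * (b \<bullet> v))\<^sup>2 - t b * lam b \<xi>)"
  have "\<forall>b\<in>J. \<exists>L. \<forall>s. L \<le> (1/4) * (exp s * (b \<bullet> v))\<^sup>2 - t b * s"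
    using vJ t lowb by blast
  then obtain L where L: "\<And>b s. b \<in> J \<Longrightarrow> L b \<le> (1/4) * (exp s * (b \<bullet> v))\<^sup>2 - t b * s" by metis
  define L0 where "L0 = (\<Sum>b\<in>J. L b)"
  have nrm_u: "(mexp \<xi> *v v) \<bullet> (mexp \<xi> *v v) = (\<Sum>b\<in>J. (exp (lam b \<xi>) * (b \<bullet> v))\<^sup>2)" if "\<xi> \<in> a" for \<xi>
  proof -
    have "(mexp \<xi> *v v) \<bullet> (mexp \<xi> *v v) = (\<Sum>b\<in>B. (exp (lam b \<xi>) * (b \<bullet> v))\<^sup>2)"
      using that by (simp add: norm2[of "mexp \<xi> *v v"] mexp_coord cong: sum.cong)
    also have "\<dots> = (\<Sum>b\<in>J. (exp (lam b \<xi>) * (b \<bullet> v))\<^sup>2)"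
      using J vnJ fin by (intro sum.mono_neutral_right) auto
    finally show ?thesis .
  qed
  have Hlow: "(1/4) * ((mexp \<xi> *v v) \<bullet> (mexp \<xi> *v v)) + L0 \<le> H \<xi>" if "\<xi> \<in> a" for \<xi>
  proof -
    have "(1/4) * ((mexp \<xi> *v v) \<bullet> (mexp \<xi> *v v)) + L0
        = (\<Sum>b\<in>J. (1/4) * (exp (lam b \<xi>) * (b \<bullet> v))\<^sup>2 + L b)"
      using that by (simp add: nrm_u L0_def sum_distrib_left sum.distrib)
    also have "\<dots> \<le> H \<xi>" unfolding H_def
    proof (rule sum_mono)
      fix b assume b: "b \<in> J"
      have "L b \<le> (1/4) * (exp (lam b \<xi>) * (b \<bullet> v))\<^sup>2 - t b * lam b \<xi>" using L[OF b] .
      then show "(1/4) * (exp (lam b \<xi>) * (b \<bullet> v))\<^sup>2 + L b \<le> (1/2) * (exp (lam b \<xi>) * (b \<bullet> v))\<^sup>2 - t b * lam b \<xi>"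
        by linarith
    qed
    finally show ?thesis .
  qed
  have HL0: "L0 \<le> H \<xi>" if "\<xi> \<in> a" for \<xi>
  proof -
    have "0 \<le> (mexp \<xi> *v v) \<bullet> (mexp \<xi> *v v)" by simp
    then show ?thesis using Hlow[OF that] by linarith
  qed
  have bdd: "bdd_below (H ` a)" using HL0 by (auto intro!: bdd_belowI[of _ L0])
  have a0: "0 \<in> a" using a subspace_0 by blast
  define m where "m = Inf (H ` a)"
  have mle: "m \<le> H \<xi>" if "\<xi> \<in> a" for \<xi> unfolding m_def using bdd that by (simp add: cInf_lower)
  have "\<exists>\<xi>\<in>a. H \<xi> < m + 1 / (Suc k)" for k
  proof (rule ccontr)
    assume "\<not> ?thesis"
    then have "\<forall>\<xi>\<in>a. m + 1 / (Suc k) \<le> H \<xi>" by auto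
    then have "m + 1 / (Suc k) \<le> m" unfolding m_def using a0 by (intro cInf_greatest) auto
    then show False by simp
  qed
  then obtain xs where xs: "\<And>k. xs k \<in> a" "\<And>k. H (xs k) < m + 1 / (Suc k)" by metis
  define u where "u = (\<lambda>k. mexp (xs k) *v v)"
  have ubd: "u k \<bullet> u k \<le> 4 * (m + 1 - L0)" for k
  proof -
    have "1 / real (Suc k) \<le> 1" by simp
    then have "H (xs k) < m + 1" using xs(2)[of k] by linarith
    then show ?thesis using Hlow[OF xs(1)[of k]] by (simp add: u_def)
  qed
  have "bounded (range u)"
    unfolding bounded_iff
  proof (intro exI ballI)
    fix y assume "y \<in> range u"
    then obtain k where "y = u k" by blast
    then show "norm y \<le> sqrt (4 * (m + 1 - L0))"
      using ubd[of k] by (simp add: norm_eq_sqrt_inner)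
  qed
  then obtain w r where r: "strict_mono r" "(u \<circ> r) \<longlonglongrightarrow> w"
    using bounded_imp_convergent_subsequence by blast
  have wcl: "w \<in> closure (orbit (mexp ` a) v)"
    unfolding closure_sequential
    by (intro exI[of _ "u \<circ> r"] conjI r(2) allI) (auto simp: u_def orbit_def xs(1))
  have wJ: "\<forall>b\<in>B-J. b \<bullet> w = 0" using coord_zero_closure vnJ wcl by blast
  have "(\<eta> *v w) \<bullet> w = (\<Sum>b\<in>J. t b * lam b \<eta>)" if \<eta>: "\<eta> \<in> a" for \<eta>
  proof -
    define \<Phi> where "\<Phi> = (\<lambda>y s. \<Sum>b\<in>J. (1/2) * (b \<bullet> y)\<^sup>2 * ((exp (s * lam b \<eta>))\<^sup>2 - 1) - s * (t b * lam b \<eta>))"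
    have Phi_k: "\<Phi> (u k) s = H (xs k + s *\<^sub>R \<eta>) - H (xs k)" for k s
    proof -
      have "H (xs k + s *\<^sub>R \<eta>) - H (xs k) =
          (\<Sum>b\<in>J. ((1/2) * (exp (lam b (xs k) + s * lam b \<eta>) * (b \<bullet> v))\<^sup>2 - t b * (lam b (xs k) + s * lam b \<eta>))
                 - ((1/2) * (exp (lam b (xs k)) * (b \<bullet> v))\<^sup>2 - t b * lam b (xs k)))"
        by (simp add: H_def lam_add lam_scale sum_subtractf)
      also have "\<dots> = \<Phi> (u k) s"
        unfolding \<Phi>_def u_def using J
        by (intro sum.cong refl) (auto simp: mexp_coord[OF xs(1)] exp_add power_mult_distrib algebra_simps)
      finally show ?thesis by simp
    qed
    have Phi_lb: "- (1 / Suc k) < \<Phi> (u k) s" for k s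
    proof -
      have "xs k + s *\<^sub>R \<eta> \<in> a" using a xs(1) \<eta> by (simp add: subspace_add subspace_mul)
      then have "m \<le> H (xs k + s *\<^sub>R \<eta>)" by (rule mle)
      then show ?thesis using Phi_k[of k s] xs(2)[of k] by simp
    qed
    have Phi_nn: "0 \<le> \<Phi> w s" for s
    proof -
      have lim1: "(\<lambda>k. 1 / real (Suc k)) \<longlonglongrightarrow> 0"
        using LIMSEQ_inverse_real_of_nat by (simp add: inverse_eq_divide)
      have "(\<lambda>k. \<Phi> ((u \<circ> r) k) s + 1 / Suc k) \<longlonglongrightarrow> \<Phi> w s + 0"
        unfolding \<Phi>_def
        by (intro tendsto_intros r(2) lim1)
      moreover have "\<forall>k\<ge>0. 0 \<le> \<Phi> ((u \<circ> r) k) s + 1 / Suc k"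
      proof (intro allI impI)
        fix k :: nat
        have "k \<le> r k" using r(1) seq_suble by blast
        then have "1 / real (Suc (r k)) \<le> 1 / Suc k" by (simp add: frac_le)
        then show "0 \<le> \<Phi> ((u \<circ> r) k) s + 1 / Suc k" using Phi_lb[of "r k" s] by simp
      qed
      ultimately show ?thesis using LIMSEQ_le_const by fastforce
    qed
    define D where "D = (\<Sum>b\<in>J. (b \<bullet> w)\<^sup>2 * lam b \<eta> - t b * lam b \<eta>)"
    have "((\<lambda>s. \<Phi> w s) has_real_derivative D) (at 0)"
      unfolding \<Phi>_def D_def
      by (rule derivative_eq_intros refl | simp)+ (rule sum.cong; simp add: power2_eq_square)
    moreover have "\<Phi> w 0 = 0" by (simp add: \<Phi>_def)
    ultimately have "D = 0" using Phi_nn by (intro DERIV_local_min[of "\<lambda>s. \<Phi> w s" D 0 1]) auto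
    then have "(\<Sum>b\<in>J. (b \<bullet> w)\<^sup>2 * lam b \<eta>) = (\<Sum>b\<in>J. t b * lam b \<eta>)"
      by (simp add: D_def sum_subtractf)
    moreover have "(\<eta> *v w) \<bullet> w = (\<Sum>b\<in>J. (b \<bullet> w)\<^sup>2 * lam b \<eta>)"
    proof -
      have "(\<eta> *v w) \<bullet> w = (\<Sum>b\<in>B. lam b \<eta> * (b \<bullet> w)\<^sup>2)" using quad \<eta> by blast
      also have "\<dots> = (\<Sum>b\<in>J. lam b \<eta> * (b \<bullet> w)\<^sup>2)"
        using J wJ fin by (intro sum.mono_neutral_right) auto
      finally show ?thesis by (simp add: mult.commute)
    qed
    ultimately show ?thesis by simp
  qed
  then show ?thesis using wcl by blast
qed

end


context grp
begin

lemma generic_point: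
  assumes fin: "finite J" and lin: "\<And>b. linear (L b)"
    and nz: "\<forall>b\<in>J. \<exists>g\<in>G. L b g \<noteq> 0"
  shows "openin (top_of_set G) W \<Longrightarrow> W \<noteq> {} \<Longrightarrow> \<exists>g\<in>W. \<forall>b\<in>J. L b g \<noteq> (0::real)"
  using fin nz
proof (induction J arbitrary: W rule: finite_induct)
  case empty
  then show ?case by auto
next
  case (insert b J)
  define W' where "W' = W \<inter> {g. L b g \<noteq> 0}"
  have cont: "continuous_on UNIV (L b)"
    using lin linear_continuous_on linear_conv_bounded_linear by blast
  have "open {g. L b g \<noteq> 0}"
    using open_vimage[OF open_Compl[OF closed_singleton[of 0]] cont] by (simp add: vimage_def)
  then have W'o: "openin (top_of_set G) W'" unfolding W'_def using insert.prems(1)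
    by (simp add: openin_Int_open)
  have "W' \<noteq> {}"
  proof
    assume "W' = {}"
    then have "\<And>g. g \<in> W \<Longrightarrow> L b g = 0" by (auto simp: W'_def)
    moreover obtain g0 where "g0 \<in> W" using insert.prems(2) by blast
    ultimately have "\<forall>g\<in>G. L b g = 0" using vanish[OF lin insert.prems(1)] by blast
    then show False using insert.prems(3) by auto
  qed
  then obtain g where "g \<in> W'" "\<forall>c\<in>J. L c g \<noteq> 0" using insert.IH[OF W'o] insert.prems(3) by blast
  then show ?case by (auto simp: W'_def)
qed

end

theorem mainTheorem8:
  fixes G :: "(real^'n^'n) set" and a :: "(real^'n^'n) set" and x :: "real^'n"
  assumes "closed_transpose_subgroup G"
    and "G = {k ** mexp X | k X. k \<in> Kpart G \<and> X \<in> ppart G}"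
    and "abelian_subalg a G"
  shows "\<exists>v \<in> orbit G x.
           mu a ` closure (orbit G x) = mu a ` closure (orbit (mexp ` a) v) \<and>
           polyhedral a (mu a ` closure (orbit G x))"
proof -
  note cts = assms(1) and ab = assms(3)
  interpret grp G using cts by unfold_locales (auto simp: closed_transpose_subgroup_def)
  have asub: "subspace a" and app: "a \<subseteq> ppart G" and acomm: "\<forall>X\<in>a. \<forall>Y\<in>a. X ** Y - Y ** X = 0"
    using ab by (auto simp: abelian_subalg_def)
  have sy: "transpose X = X" if "X \<in> a" for X using app that by (auto simp: ppart_def)
  have cm: "X ** Y = Y ** X" if "X \<in> a" "Y \<in> a" for X Y
  proof -
    have "X ** Y - Y ** X = 0" using acomm that by blast
    then show ?thesis by simp
  qed
  interpret symcomm a using sy cm by unfold_locales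
  have expG: "mexp X \<in> G" if "X \<in> a" for X
  proof -
    have "X \<in> lie_alg G" using app that by (auto simp: ppart_def)
    then have "mexp (1 *\<^sub>R X) \<in> G" by (simp only: lie_alg_def mem_Collect_eq)
    then show ?thesis by simp
  qed
  have "inv_sub a UNIV" by (simp add: inv_sub_def)
  from joint_basis[OF this] obtain B where B0: "B \<subseteq> UNIV \<and> finite B \<and> pairwise orthogonal B \<and> (\<forall>b\<in>B. norm b = 1)
     \<and> span B = UNIV \<and> (\<forall>b\<in>B. \<forall>X\<in>a. \<exists>c. X *v b = c *\<^sub>R b)"
    by (rule exE)
  have B: "finite B" "pairwise orthogonal B" "\<forall>b\<in>B. norm b = 1" "span B = UNIV"
    "\<forall>b\<in>B. \<forall>X\<in>a. \<exists>c. X *v b = c *\<^sub>R b"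
    using B0 by simp_all
  interpret ebasis a B using B by unfold_locales auto
  define J where "J = {b \<in> B. \<exists>g\<in>G. b \<bullet> (g *v x) \<noteq> 0}"
  have JB: "J \<subseteq> B" and finJ: "finite J" using B(1) by (auto simp: J_def)
  have linL: "linear (\<lambda>g. b \<bullet> (g *v x))" for b
    by (rule linearI) (simp_all add: matrix_vector_mult_add_rdistrib inner_add_right
        scaleR_matrix_vector_assoc[symmetric])
  have "\<exists>g\<in>G. \<forall>b\<in>J. b \<bullet> (g *v x) \<noteq> 0"
    using generic_point[of J "\<lambda>b g. b \<bullet> (g *v x)" G, OF finJ linL] one
    by (auto simp: J_def)
  then obtain g1 where g1: "g1 \<in> G" "\<forall>b\<in>J. b \<bullet> (g1 *v x) \<noteq> 0" by blast
  define v where "v = g1 *v x"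
  have vG: "v \<in> orbit G x" using g1 by (auto simp: v_def orbit_def)
  have vJ: "\<forall>b\<in>J. b \<bullet> v \<noteq> 0" using g1 by (simp add: v_def)
  have vnJ: "\<forall>b\<in>B-J. b \<bullet> v = 0" using g1(1) by (auto simp: v_def J_def)
  have Zcl: "\<forall>w\<in>closure (orbit G x). \<forall>b\<in>B-J. b \<bullet> w = 0"
  proof (intro ballI)
    fix w b assume w: "w \<in> closure (orbit G x)" and b: "b \<in> B - J"
    have "orbit G x \<subseteq> {u. b \<bullet> u = 0}" using b by (auto simp: orbit_def J_def)
    then have "closure (orbit G x) \<subseteq> {u. b \<bullet> u = 0}"
      by (rule closure_minimal) (rule closed_hyperplane)
    then show "b \<bullet> w = 0" using w by auto
  qed
  have "orbit (mexp ` a) v \<subseteq> orbit G x"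
  proof
    fix y assume "y \<in> orbit (mexp ` a) v"
    then obtain X where X: "X \<in> a" "y = mexp X *v v" by (auto simp: orbit_def)
    then have "y = (mexp X ** g1) *v x" by (simp add: v_def matrix_vector_mul_assoc)
    moreover have "mexp X ** g1 \<in> G" using mult expG[OF X(1)] g1(1) by blast
    ultimately show "y \<in> orbit G x" by (auto simp: orbit_def)
  qed
  then have clsub: "closure (orbit (mexp ` a) v) \<subseteq> closure (orbit G x)" by (rule closure_mono)
  have "\<forall>b\<in>B. \<exists>r. r \<in> a \<and> (\<forall>\<xi>\<in>a. lam b \<xi> = \<xi> \<bullet> r)"
  proof
    fix b assume "b \<in> B"
    have "\<exists>r\<in>a. \<forall>\<xi>\<in>a. lam b \<xi> = \<xi> \<bullet> r" by (rule riesz[OF asub]) (simp add: lam_add lam_scale)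
    then show "\<exists>r. r \<in> a \<and> (\<forall>\<xi>\<in>a. lam b \<xi> = \<xi> \<bullet> r)" by blast
  qed
  from bchoice[OF this] obtain q where q0: "\<forall>b\<in>B. q b \<in> a \<and> (\<forall>\<xi>\<in>a. lam b \<xi> = \<xi> \<bullet> q b)"
    by blast
  have q: "\<And>b. b \<in> B \<Longrightarrow> q b \<in> a" "\<And>b \<xi>. b \<in> B \<Longrightarrow> \<xi> \<in> a \<Longrightarrow> lam b \<xi> = \<xi> \<bullet> q b"
    using q0 by auto
  define f where "f = (\<lambda>t \<xi>. if \<xi> \<in> a then (\<Sum>j\<in>J. t j * (\<xi> \<bullet> q j)) else (0::real))"
  define C where "C = {f t | t. \<forall>j. t j \<ge> 0}"
  have polyC: "polyhedral a C" unfolding C_def f_def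
    using polyhedral_cone[OF asub finJ] q(1) JB by blast
  have mu_form: "mu a w = f (\<lambda>j. (j \<bullet> w)\<^sup>2)" if wz: "\<forall>b\<in>B-J. b \<bullet> w = 0" for w
  proof
    fix \<xi> show "mu a w \<xi> = f (\<lambda>j. (j \<bullet> w)\<^sup>2) \<xi>"
    proof (cases "\<xi> \<in> a")
      case True
      have "mu a w \<xi> = (\<Sum>b\<in>B. lam b \<xi> * (b \<bullet> w)\<^sup>2)" using True by (simp add: mu_def quad)
      also have "\<dots> = (\<Sum>b\<in>J. lam b \<xi> * (b \<bullet> w)\<^sup>2)"
        using JB wz B(1) by (intro sum.mono_neutral_right) auto
      also have "\<dots> = (\<Sum>j\<in>J. (j \<bullet> w)\<^sup>2 * (\<xi> \<bullet> q j))"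
        using JB True q(2) by (intro sum.cong refl) (auto simp: mult.commute)
      finally show ?thesis using True by (simp add: f_def)
    next
      case False then show ?thesis by (simp add: mu_def f_def)
    qed
  qed
  have D1: "mu a ` closure (orbit G x) \<subseteq> C"
  proof
    fix y assume "y \<in> mu a ` closure (orbit G x)"
    then obtain w where w: "w \<in> closure (orbit G x)" "y = mu a w" by blast
    then have "y = f (\<lambda>j. (j \<bullet> w)\<^sup>2)" using mu_form Zcl by blast
    then show "y \<in> C" unfolding C_def by auto
  qed
  have D2: "C \<subseteq> mu a ` closure (orbit (mexp ` a) v)"
  proof
    fix y assume "y \<in> C"
    then obtain t where t: "\<forall>j. t j \<ge> 0" "y = f t" unfolding C_def by blast
    obtain w where w: "w \<in> closure (orbit (mexp ` a) v)"
      "\<forall>\<eta>\<in>a. (\<eta> *v w) \<bullet> w = (\<Sum>b\<in>J. t b * lam b \<eta>)"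
      using surj_cone[OF asub JB vJ vnJ t(1)] by blast
    have "mu a w = f t"
    proof
      fix \<xi> show "mu a w \<xi> = f t \<xi>"
      proof (cases "\<xi> \<in> a")
        case True
        then have "mu a w \<xi> = (\<Sum>b\<in>J. t b * lam b \<xi>)" using w(2) by (simp add: mu_def)
        also have "\<dots> = (\<Sum>j\<in>J. t j * (\<xi> \<bullet> q j))"
          using JB True q(2) by (intro sum.cong refl) auto
        finally show ?thesis using True by (simp add: f_def)
      next
        case False then show ?thesis by (simp add: mu_def f_def)
      qed
    qed
    then have "y = mu a w" using t(2) by simp
    then show "y \<in> mu a ` closure (orbit (mexp ` a) v)" using w(1) by (simp add: rev_image_eqI)
  qed
  have D3: "mu a ` closure (orbit (mexp ` a) v) \<subseteq> mu a ` closure (orbit G x)"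
    using clsub by (rule image_mono)
  have eq1: "mu a ` closure (orbit G x) = C" using D1 D2 D3 by blast
  have eq2: "mu a ` closure (orbit G x) = mu a ` closure (orbit (mexp ` a) v)" using D1 D2 D3 by blast
  show ?thesis using vG eq1 eq2 polyC by auto
qed


end
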